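(* For a smooth function $f:\mathbb R^2\to\mathbb R$ let $v(f)=(-\partial_{x_2}f,\partial_{x_1}f)$. Let $\mathcal F=\{v(x_1),v(x_2),v(x_1^2x_2^2)\}=\{(0,1),(-1,0),(-2x_1^2x_2,2x_1x_2^2)\}$. Then $\operatorname{Lie}\mathcal F=\{v(f): f\in\mathbb R[x_1,x_2]\}$.
   Context: For smooth vector fields $f_1,f_2$ on $\mathbb R^2$ the Lie bracket is $[f_1,f_2]=(\nabla_x f_2)f_1-(\nabla_x f_1)f_2$. $\operatorname{Lie}\mathcal F$ denotes the smallest linear space of smooth vector fields that contains $\mathcal F$ and is closed under the Lie bracket. $\mathbb R[x_1,x_2]$ is the ring of real polynomials in $x_1,x_2$. *)

theory Defs
  imports "HOL-Analysis.Analysis"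
begin

type_synonym vf = "real \<times> real \<Rightarrow> real \<times> real"

definition poly2 :: "(real \<times> real \<Rightarrow> real) \<Rightarrow> bool" where
  "poly2 f \<longleftrightarrow> (\<exists>(c :: nat \<Rightarrow> nat \<Rightarrow> real) N.
      f = (\<lambda>(x1, x2). \<Sum>i\<le>N. \<Sum>j\<le>N. c i j * x1 ^ i * x2 ^ j))"

definition ham :: "(real \<times> real \<Rightarrow> real) \<Rightarrow> vf" where
  "ham f = (\<lambda>x. (- frechet_derivative f (at x) (0, 1), frechet_derivative f (at x) (1, 0)))"

definition lie_bracket :: "vf \<Rightarrow> vf \<Rightarrow> vf" where
  "lie_bracket f1 f2 = (\<lambda>x. frechet_derivative f2 (at x) (f1 x) - frechet_derivative f1 (at x) (f2 x))"

inductive_set lie_gen :: "vf set \<Rightarrow> vf set" for F where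
  base: "f \<in> F \<Longrightarrow> f \<in> lie_gen F"
| zero: "(\<lambda>x. 0) \<in> lie_gen F"
| add: "f \<in> lie_gen F \<Longrightarrow> g \<in> lie_gen F \<Longrightarrow> (\<lambda>x. f x + g x) \<in> lie_gen F"
| scale: "f \<in> lie_gen F \<Longrightarrow> (\<lambda>x. c *\<^sub>R f x) \<in> lie_gen F"
| bracket: "f \<in> lie_gen F \<Longrightarrow> g \<in> lie_gen F \<Longrightarrow> lie_bracket f g \<in> lie_gen F"

end

theory Submission
  imports Defs
begin

definition lp :: "(real \<times> nat \<times> nat) list \<Rightarrow> real \<times> real \<Rightarrow> real" where
  "lp L = (\<lambda>p. sum_list (map (\<lambda>(a,i,j). a * fst p ^ i * snd p ^ j) L))"
definition dxL :: "(real \<times> nat \<times> nat) list \<Rightarrow> (real \<times> nat \<times> nat) list" where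
  "dxL L = map (\<lambda>(a,i,j). (a * real i, i - 1, j)) L"
definition dyL :: "(real \<times> nat \<times> nat) list \<Rightarrow> (real \<times> nat \<times> nat) list" where
  "dyL L = map (\<lambda>(a,i,j). (a * real j, i, j - 1)) L"
definition mulL :: "(real \<times> nat \<times> nat) list \<Rightarrow> (real \<times> nat \<times> nat) list \<Rightarrow> (real \<times> nat \<times> nat) list" where
  "mulL A B = concat (map (\<lambda>(a,i,j). map (\<lambda>(b,k,l). (a*b, i+k, j+l)) B) A)"
definition scL :: "real \<Rightarrow> (real \<times> nat \<times> nat) list \<Rightarrow> (real \<times> nat \<times> nat) list" where
  "scL c A = map (\<lambda>(a,i,j). (c*a,i,j)) A"
definition brL where
  "brL F G = mulL (dxL F) (dyL G) @ scL (-1) (mulL (dyL F) (dxL G))"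

lemma lp_Nil[simp]: "lp [] p = 0" by (simp add: lp_def)
lemma lp_Cons[simp]: "lp ((a,i,j)#L) p = a * fst p ^ i * snd p ^ j + lp L p" by (simp add: lp_def)
lemma lp_append[simp]: "lp (A @ B) p = lp A p + lp B p" by (simp add: lp_def)
lemma lp_scL[simp]: "lp (scL c A) p = c * lp A p"
  by (induction A) (auto simp: lp_def scL_def algebra_simps)
lemma lp_mul1: "lp (map (\<lambda>(b,k,l). (a*b, i+k, j+l)) B) p = a * fst p ^ i * snd p ^ j * lp B p"
  by (induction B) (auto simp: lp_def algebra_simps power_add)
lemma lp_mulL[simp]: "lp (mulL A B) p = lp A p * lp B p"
proof (induction A)
  case Nil then show ?case by (simp add: mulL_def)
next
  case (Cons x A)
  obtain a i j where x: "x = (a,i,j)" by (cases x) auto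
  have "lp (mulL (x#A) B) p = lp (map (\<lambda>(b,k,l). (a*b, i+k, j+l)) B) p + lp (mulL A B) p"
    by (simp add: mulL_def x lp_def)
  also have "\<dots> = a * fst p ^ i * snd p ^ j * lp B p + lp A p * lp B p"
    by (simp only: lp_mul1 Cons.IH)
  finally show ?case by (simp add: x algebra_simps)
qed
lemma dxL_simps[simp]: "dxL [] = []" "dxL ((a,i,j)#L) = (a * real i, i - 1, j) # dxL L"
  "dxL (A @ B) = dxL A @ dxL B" "dxL (scL c A) = scL c (dxL A)"
  by (auto simp: dxL_def scL_def)
lemma dyL_simps[simp]: "dyL [] = []" "dyL ((a,i,j)#L) = (a * real j, i, j - 1) # dyL L"
  "dyL (A @ B) = dyL A @ dyL B" "dyL (scL c A) = scL c (dyL A)"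
  by (auto simp: dyL_def scL_def)
lemma dxy_comm: "dyL (dxL L) = dxL (dyL L)"
  by (induction L) (auto simp: dxL_def dyL_def)

definition hasD :: "(real \<times> real \<Rightarrow> real) \<Rightarrow> (real \<times> real \<Rightarrow> real) \<Rightarrow> (real \<times> real \<Rightarrow> real) \<Rightarrow> bool" where
  "hasD f A B \<longleftrightarrow> (\<forall>p. (f has_derivative (\<lambda>v. A p * fst v + B p * snd v)) (at p))"

lemma hasD_mono: "hasD (\<lambda>p. a * fst p ^ i * snd p ^ j)
   (\<lambda>p. a * real i * fst p ^ (i - 1) * snd p ^ j) (\<lambda>p. a * real j * fst p ^ i * snd p ^ (j - 1))"
  unfolding hasD_def
proof
  fix p :: "real \<times> real"
  show "((\<lambda>p. a * fst p ^ i * snd p ^ j) has_derivative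
     (\<lambda>v. a * real i * fst p ^ (i - 1) * snd p ^ j * fst v + a * real j * fst p ^ i * snd p ^ (j - 1) * snd v)) (at p)"
    by (rule derivative_eq_intros refl | simp)+ (auto simp: fun_eq_iff algebra_simps)
qed

lemma hasD_add: "hasD f A B \<Longrightarrow> hasD g C D \<Longrightarrow> hasD (\<lambda>p. f p + g p) (\<lambda>p. A p + C p) (\<lambda>p. B p + D p)"
  unfolding hasD_def
  by (auto intro!: has_derivative_eq_rhs[OF has_derivative_add] simp: fun_eq_iff algebra_simps)
lemma hasD_diff: "hasD f A B \<Longrightarrow> hasD g C D \<Longrightarrow> hasD (\<lambda>p. f p - g p) (\<lambda>p. A p - C p) (\<lambda>p. B p - D p)"
  unfolding hasD_def
  by (auto intro!: has_derivative_eq_rhs[OF has_derivative_diff] simp: fun_eq_iff algebra_simps)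
lemma hasD_mult: "hasD f A B \<Longrightarrow> hasD g C D \<Longrightarrow>
   hasD (\<lambda>p. f p * g p) (\<lambda>p. A p * g p + f p * C p) (\<lambda>p. B p * g p + f p * D p)"
  unfolding hasD_def
  by (auto intro!: has_derivative_eq_rhs[OF has_derivative_mult] simp: fun_eq_iff algebra_simps)

lemma hasD_lp: "hasD (lp L) (lp (dxL L)) (lp (dyL L))"
proof (induction L)
  case Nil then show ?case by (simp add: hasD_def lp_def)
next
  case (Cons x L)
  obtain a i j where x: "x = (a,i,j)" by (cases x) auto
  have "hasD (\<lambda>p. a * fst p ^ i * snd p ^ j + lp L p)
     (\<lambda>p. a * real i * fst p ^ (i - 1) * snd p ^ j + lp (dxL L) p)
     (\<lambda>p. a * real j * fst p ^ i * snd p ^ (j - 1) + lp (dyL L) p)"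
    by (rule hasD_add[OF hasD_mono Cons])
  moreover have "lp (x # L) = (\<lambda>p. a * fst p ^ i * snd p ^ j + lp L p)"
    "lp (dxL (x # L)) = (\<lambda>p. a * real i * fst p ^ (i - 1) * snd p ^ j + lp (dxL L) p)"
    "lp (dyL (x # L)) = (\<lambda>p. a * real j * fst p ^ i * snd p ^ (j - 1) + lp (dyL L) p)"
    by (auto simp: x simp del: One_nat_def)
  ultimately show ?case by simp
qed

lemma hasD_D: "hasD f A B \<Longrightarrow> (f has_derivative (\<lambda>v. A p * fst v + B p * snd v)) (at p)"
  unfolding hasD_def by blast

lemma ham_hasD: "hasD f A B \<Longrightarrow> ham f = (\<lambda>p. (- B p, A p))"
proof -
  assume a: "hasD f A B"
  have "\<And>p. frechet_derivative f (at p) = (\<lambda>v. A p * fst v + B p * snd v)"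
    using frechet_derivative_at[OF hasD_D[OF a]] by (rule sym)
  then show ?thesis by (simp add: ham_def)
qed

lemma fd_field:
  assumes "hasD A Ax Ay" "hasD B Bx By"
  shows "frechet_derivative (\<lambda>p. (- B p, A p)) (at p) v =
     (- (Bx p * fst v + By p * snd v), Ax p * fst v + Ay p * snd v)"
proof -
  have "((\<lambda>p. (- B p, A p)) has_derivative
     (\<lambda>v. (- (Bx p * fst v + By p * snd v), Ax p * fst v + Ay p * snd v))) (at p)"
    by (rule has_derivative_Pair[OF has_derivative_minus[OF hasD_D[OF assms(2)]] hasD_D[OF assms(1)]])
  from frechet_derivative_at[OF this] show ?thesis by (rule sym[THEN fun_cong])
qed

lemma bracket_general:
  assumes f: "hasD f fx fy" "hasD fx fxx fxy" "hasD fy fyx fyy" "\<And>p. fxy p = fyx p"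
      and g: "hasD g gx gy" "hasD gx gxx gxy" "hasD gy gyx gyy" "\<And>p. gxy p = gyx p"
  shows "lie_bracket (ham f) (ham g) = ham (\<lambda>p. fx p * gy p - fy p * gx p)"
proof -
  have h: "hasD (\<lambda>p. fx p * gy p - fy p * gx p)
     (\<lambda>p. (fxx p * gy p + fx p * gyx p) - (fyx p * gx p + fy p * gxx p))
     (\<lambda>p. (fxy p * gy p + fx p * gyy p) - (fyy p * gx p + fy p * gxy p))"
    by (intro hasD_diff hasD_mult f g)
  show ?thesis
    unfolding lie_bracket_def ham_hasD[OF f(1)] ham_hasD[OF g(1)] ham_hasD[OF h]
  proof (rule ext)
    fix p
    show "frechet_derivative (\<lambda>p. (- gy p, gx p)) (at p) (- fy p, fx p) -
        frechet_derivative (\<lambda>p. (- fy p, fx p)) (at p) (- gy p, gx p) =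
        (- ((fxy p * gy p + fx p * gyy p) - (fyy p * gx p + fy p * gxy p)),
         (fxx p * gy p + fx p * gyx p) - (fyx p * gx p + fy p * gxx p))"
      unfolding fd_field[OF f(2,3)] fd_field[OF g(2,3)] f(4) g(4)
      by (simp add: algebra_simps)
  qed
qed

lemma ham_lp: "ham (lp L) = (\<lambda>p. (- lp (dyL L) p, lp (dxL L) p))"
  by (rule ham_hasD[OF hasD_lp])

lemma bracket_lp: "lie_bracket (ham (lp F)) (ham (lp G)) = ham (lp (brL F G))"
proof -
  have e: "lp (brL F G) = (\<lambda>p. lp (dxL F) p * lp (dyL G) p - lp (dyL F) p * lp (dxL G) p)"
    by (auto simp: brL_def fun_eq_iff)
  show ?thesis unfolding e
    by (rule bracket_general[OF hasD_lp hasD_lp hasD_lp _ hasD_lp hasD_lp hasD_lp]) (simp_all add: dxy_comm)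
qed

lemma ham_append: "ham (lp (A @ B)) = (\<lambda>x. ham (lp A) x + ham (lp B) x)"
  by (auto simp: ham_lp fun_eq_iff)
lemma ham_scL: "ham (lp (scL c A)) = (\<lambda>x. c *\<^sub>R ham (lp A) x)"
  by (auto simp: ham_lp fun_eq_iff)
lemma ham_Nil: "ham (lp []) = (\<lambda>x. 0)"
  by (auto simp: ham_lp fun_eq_iff zero_prod_def)

definition M :: "nat \<Rightarrow> nat \<Rightarrow> vf" where "M i j = ham (lp [(1,i,j)])"

lemma pow_aux: "real a * (x ^ (a - 1) * x ^ c) = real a * (x::real) ^ (a + c - 1)"
  by (cases a) (auto simp: power_add)
lemma pow_aux2: "real c * (x ^ a * x ^ (c - 1)) = real c * (x::real) ^ (a + c - 1)"
  by (cases c) (auto simp: power_add)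

lemma mono_br: "lie_bracket (M a b) (M c d) = (\<lambda>x. (real (a*d) - real (b*c)) *\<^sub>R M (a+c-1) (b+d-1) x)"
proof -
  have "lp (brL [(1,a,b)] [(1,c,d)]) = lp (scL (real (a*d) - real (b*c)) [(1,a+c-1,b+d-1)])"
  proof (rule ext)
    fix p :: "real \<times> real"
    define x where "x = fst p"
    define y where "y = snd p"
    have "lp (brL [(1,a,b)] [(1,c,d)]) p =
       (real a * (x ^ (a - 1) * x ^ c)) * (real d * (y ^ b * y ^ (d - 1))) -
       (real b * (y ^ (b - 1) * y ^ d)) * (real c * (x ^ a * x ^ (c - 1)))"
      by (simp add: brL_def mulL_def x_def y_def power_add algebra_simps)
    also have "\<dots> = (real (a*d) - real (b*c)) * (x ^ (a+c-1) * y ^ (b+d-1))"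
      unfolding pow_aux pow_aux2 by (simp add: algebra_simps)
    finally show "lp (brL [(1,a,b)] [(1,c,d)]) p = lp (scL (real (a*d) - real (b*c)) [(1,a+c-1,b+d-1)]) p"
      by (simp add: x_def y_def algebra_simps)
  qed
  then show ?thesis unfolding M_def bracket_lp by (simp add: ham_scL)
qed

lemma step:
  assumes "G \<in> lie_gen F" "M i j \<in> lie_gen F" "lie_bracket G (M i j) = (\<lambda>x. k *\<^sub>R M p q x)" "k \<noteq> 0"
  shows "M p q \<in> lie_gen F"
proof -
  have "(\<lambda>x. k *\<^sub>R M p q x) \<in> lie_gen F"
    using lie_gen.bracket[OF assms(1,2)] assms(3) by simp
  from lie_gen.scale[OF this, of "1/k"] show ?thesis using assms(4) by simp
qed

lemma all_M:
  assumes g1: "M 1 0 \<in> lie_gen F" and g2: "M 0 1 \<in> lie_gen F" and g3: "M 2 2 \<in> lie_gen F"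
  shows "M p q \<in> lie_gen F"
proof -
  have m21: "M 2 1 \<in> lie_gen F"
    by (rule step[OF g1 g3, of 2]) (simp_all add: mono_br numeral_2_eq_2)
  have m12: "M 1 2 \<in> lie_gen F"
    by (rule step[OF g2 g3, of "-2"]) (simp_all add: mono_br numeral_2_eq_2)
  have A: "M (i+1) j \<in> lie_gen F" if "M i j \<in> lie_gen F" "i \<noteq> 2*j" for i j
    by (rule step[OF m21 that(1), of "real (2*j) - real i"]) (use that(2) in \<open>simp_all add: mono_br numeral_2_eq_2\<close>)
  have B: "M i (j+1) \<in> lie_gen F" if "M i j \<in> lie_gen F" "j \<noteq> 2*i" for i j
    by (rule step[OF m12 that(1), of "real j - real (2*i)"]) (use that(2) in \<open>simp_all add: mono_br numeral_2_eq_2\<close>)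
  have main: "1 \<le> p + q \<Longrightarrow> M p q \<in> lie_gen F" for p q
  proof (induction "p+q" arbitrary: p q rule: less_induct)
    case less
    show ?case
    proof (cases "p = 0")
      case True
      show ?thesis
      proof (cases "q = 1")
        case True with \<open>p=0\<close> g2 show ?thesis by simp
      next
        case False
        with less.prems \<open>p=0\<close> have q2: "q \<ge> 2" by simp
        have "M 0 (q - 1) \<in> lie_gen F" using less.hyps[of 0 "q-1"] q2 \<open>p=0\<close> by simp
        from B[OF this] q2 \<open>p=0\<close> show ?thesis by simp
      qed
    next
      case p: False
      show ?thesis
      proof (cases "q = 0")
        case True
        show ?thesis
        proof (cases "p = 1")
          case True with \<open>q=0\<close> g1 show ?thesis by simp
        next
          case False
          with p have p2: "p \<ge> 2" by simp
          have "M (p - 1) 0 \<in> lie_gen F" using less.hyps[of "p-1" 0] p2 \<open>q=0\<close> by simp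
          from A[OF this] p2 \<open>q=0\<close> show ?thesis by simp
        qed
      next
        case q: False
        show ?thesis
        proof (cases "p = 2*q+1")
          case False
          have "M (p - 1) q \<in> lie_gen F" using less.hyps[of "p-1" q] p q by simp
          from A[OF this] p False show ?thesis by simp
        next
          case True
          have "M p (q - 1) \<in> lie_gen F" using less.hyps[of p "q-1"] p q by simp
          from B[OF this] q True show ?thesis by simp
        qed
      qed
    qed
  qed
  show ?thesis
  proof (cases "p + q = 0")
    case True
    then have "M p q = (\<lambda>x. 0)" by (auto simp: M_def ham_lp fun_eq_iff zero_prod_def)
    then show ?thesis using lie_gen.zero by simp
  next
    case False then show ?thesis by (intro main) arith
  qed
qed

lemma lp_concat: "lp (concat Ls) p = sum_list (map (\<lambda>L. lp L p) Ls)"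
  by (induction Ls) auto

lemma lp_row: "lp (map (\<lambda>j. (c i j, i, j)) xs) p = sum_list (map (\<lambda>j. c i j * fst p ^ i * snd p ^ j) xs)"
  by (induction xs) auto

lemma poly2_lp: "poly2 f \<Longrightarrow> \<exists>L. f = lp L"
proof -
  assume "poly2 f"
  then obtain c N where f: "f = (\<lambda>(x1, x2). \<Sum>i\<le>N. \<Sum>j\<le>N. c i j * x1 ^ i * x2 ^ j)"
    unfolding poly2_def by blast
  define L where "L = concat (map (\<lambda>i. map (\<lambda>j. (c i j, i, j)) [0..<Suc N]) [0..<Suc N])"
  have "f = lp L"
  proof (rule ext)
    fix p :: "real \<times> real"
    have "lp L p = (\<Sum>i\<le>N. \<Sum>j\<le>N. c i j * fst p ^ i * snd p ^ j)"
      unfolding L_def lp_concat map_map o_def lp_row atMost_upto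
      by (simp add: sum_list_distinct_conv_sum_set) (simp add: add.commute)
    then show "f p = lp L p" by (simp add: f split_beta)
  qed
  then show ?thesis by blast
qed

definition Pp :: "(nat \<Rightarrow> nat \<Rightarrow> real) \<Rightarrow> nat \<Rightarrow> real \<times> real \<Rightarrow> real" where
  "Pp c N = (\<lambda>(x1, x2). \<Sum>i\<le>N. \<Sum>j\<le>N. c i j * x1 ^ i * x2 ^ j)"

lemma poly2_Pp: "poly2 f \<longleftrightarrow> (\<exists>c N. f = Pp c N)"
  unfolding poly2_def Pp_def by blast

lemma Pp_ext:
  assumes "N \<le> K"
  shows "Pp c N = Pp (\<lambda>i j. if i \<le> N \<and> j \<le> N then c i j else 0) K"
proof (rule ext, clarify)
  fix x1 x2 :: real
  let ?d = "\<lambda>i j. if i \<le> N \<and> j \<le> N then c i j else 0"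
  have inner: "(\<Sum>j\<le>K. ?d i j * x1 ^ i * x2 ^ j) = (if i \<le> N then (\<Sum>j\<le>N. c i j * x1 ^ i * x2 ^ j) else 0)" for i
  proof (cases "i \<le> N")
    case True
    have "(\<Sum>j\<le>K. ?d i j * x1 ^ i * x2 ^ j) = (\<Sum>j\<le>N. ?d i j * x1 ^ i * x2 ^ j)"
      by (rule sum.mono_neutral_right) (use assms in auto)
    then show ?thesis using True by simp
  qed simp
  have "(\<Sum>i\<le>K. \<Sum>j\<le>K. ?d i j * x1 ^ i * x2 ^ j) = (\<Sum>i\<le>K. if i \<le> N then (\<Sum>j\<le>N. c i j * x1 ^ i * x2 ^ j) else 0)"
    unfolding inner ..
  also have "\<dots> = (\<Sum>i\<le>N. if i \<le> N then (\<Sum>j\<le>N. c i j * x1 ^ i * x2 ^ j) else 0)"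
    by (rule sum.mono_neutral_right) (use assms in auto)
  also have "\<dots> = (\<Sum>i\<le>N. \<Sum>j\<le>N. c i j * x1 ^ i * x2 ^ j)" by simp
  finally show "Pp c N (x1, x2) = Pp ?d K (x1, x2)" unfolding Pp_def by simp
qed

lemma poly2_add: "poly2 f \<Longrightarrow> poly2 g \<Longrightarrow> poly2 (\<lambda>p. f p + g p)"
proof -
  assume "poly2 f" "poly2 g"
  then obtain c N d K where f: "f = Pp c N" and g: "g = Pp d K" unfolding poly2_Pp by blast
  define T where "T = max N K"
  obtain c' where f': "f = Pp c' T" using Pp_ext[of N T c] f T_def by auto
  obtain d' where g': "g = Pp d' T" using Pp_ext[of K T d] g T_def by auto
  have "(\<lambda>p. f p + g p) = Pp (\<lambda>i j. c' i j + d' i j) T"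
    by (auto simp: f' g' Pp_def fun_eq_iff algebra_simps sum.distrib)
  then show ?thesis unfolding poly2_Pp by blast
qed

lemma poly2_mono: "poly2 (\<lambda>p. a * fst p ^ i * snd p ^ j)"
proof -
  define N where "N = max i j"
  have "(\<lambda>p. a * fst p ^ i * snd p ^ j) = Pp (\<lambda>k l. if k = i then (if l = j then a else 0) else 0) N"
  proof (rule ext, clarify)
    fix x1 x2 :: real
    have "Pp (\<lambda>k l. if k = i then (if l = j then a else 0) else 0) N (x1, x2)
       = (\<Sum>k\<le>N. if k = i then (\<Sum>l\<le>N. if l = j then a * x1 ^ k * x2 ^ l else 0) else 0)"
      unfolding Pp_def by (auto intro!: sum.cong simp del: sum.delta)
    also have "\<dots> = (\<Sum>k\<le>N. if k = i then a * x1 ^ i * x2 ^ j else 0)"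
    proof (rule sum.cong[OF refl])
      fix k
      have "(\<Sum>l\<le>N. if l = j then a * x1 ^ k * x2 ^ l else 0) = a * x1 ^ k * x2 ^ j"
        by (simp add: N_def)
      then show "(if k = i then (\<Sum>l\<le>N. if l = j then a * x1 ^ k * x2 ^ l else 0) else 0) =
         (if k = i then a * x1 ^ i * x2 ^ j else 0)" by simp
    qed
    also have "\<dots> = a * x1 ^ i * x2 ^ j" by (simp add: N_def)
    finally show "a * fst (x1, x2) ^ i * snd (x1, x2) ^ j = Pp (\<lambda>k l. if k = i then (if l = j then a else 0) else 0) N (x1, x2)" by simp
  qed
  then show ?thesis unfolding poly2_Pp by blast
qed

lemma lp_poly2: "poly2 (lp L)"
proof (induction L)
  case Nil
  have "lp [] = Pp (\<lambda>i j. 0) 0" by (auto simp: Pp_def fun_eq_iff)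
  then show ?case unfolding poly2_Pp by blast
next
  case (Cons x L)
  obtain a i j where x: "x = (a,i,j)" by (cases x) auto
  have "lp (x # L) = (\<lambda>p. a * fst p ^ i * snd p ^ j + lp L p)" by (auto simp: x)
  then show ?case using poly2_add[OF poly2_mono Cons] by simp
qed

theorem lemma3p12:
  shows "lie_gen {ham (\<lambda>x. fst x), ham (\<lambda>x. snd x), ham (\<lambda>x. (fst x)^2 * (snd x)^2)}
           = {ham f | f. poly2 f}"
  (is "lie_gen ?F = _")
proof
  have e1: "ham (\<lambda>x. fst x) = M 1 0" unfolding M_def
    by (rule arg_cong[where f=ham]) (auto simp: fun_eq_iff)
  have e2: "ham (\<lambda>x. snd x) = M 0 1" unfolding M_def
    by (rule arg_cong[where f=ham]) (auto simp: fun_eq_iff)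
  have e3: "ham (\<lambda>x. (fst x)^2 * (snd x)^2) = M 2 2" unfolding M_def
    by (rule arg_cong[where f=ham]) (auto simp: fun_eq_iff)
  show "lie_gen ?F \<subseteq> {ham f | f. poly2 f}"
  proof
    fix v assume "v \<in> lie_gen ?F"
    then have "\<exists>L. v = ham (lp L)"
    proof (induction rule: lie_gen.induct)
      case (base f)
      then show ?case unfolding e1 e2 e3 M_def by blast
    next
      case zero
      show ?case using ham_Nil by metis
    next
      case (add f g)
      then obtain A B where "f = ham (lp A)" "g = ham (lp B)" by blast
      then show ?case using ham_append by metis
    next
      case (scale f c)
      then obtain A where "f = ham (lp A)" by blast
      then show ?case using ham_scL by metis
    next
      case (bracket f g)
      then obtain A B where "f = ham (lp A)" "g = ham (lp B)" by blast
      then show ?case using bracket_lp by metis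
    qed
    then show "v \<in> {ham f | f. poly2 f}" using lp_poly2 by blast
  qed
  show "{ham f | f. poly2 f} \<subseteq> lie_gen ?F"
  proof clarify
    fix f :: "real \<times> real \<Rightarrow> real" assume "poly2 f"
    then obtain L where f: "f = lp L" using poly2_lp by blast
    have b1: "M 1 0 \<in> lie_gen ?F" unfolding e1[symmetric] by (rule lie_gen.base) simp
    have b2: "M 0 1 \<in> lie_gen ?F" unfolding e2[symmetric] by (rule lie_gen.base) simp
    have b3: "M 2 2 \<in> lie_gen ?F" unfolding e3[symmetric] by (rule lie_gen.base) simp
    have Mall: "M i j \<in> lie_gen ?F" for i j
      by (rule all_M[OF b1 b2 b3])
    have "ham (lp L) \<in> lie_gen ?F"
    proof (induction L)
      case Nil then show ?case using ham_Nil lie_gen.zero by metis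
    next
      case (Cons x L)
      obtain a i j where x: "x = (a,i,j)" by (cases x) auto
      have eq: "x # L = scL a [(1,i,j)] @ L" by (simp add: x scL_def)
      have "ham (lp (x # L)) = (\<lambda>y. a *\<^sub>R M i j y + ham (lp L) y)"
        unfolding eq ham_append ham_scL M_def ..
      then show ?case using lie_gen.add[OF lie_gen.scale[OF Mall] Cons] by simp
    qed
    then show "ham f \<in> lie_gen ?F" using f by simp
  qed
qed

end
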